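(* Let $k$, $n$, $r$ be nonnegative integers and let $X$ be the set of labeled lattice sequences of type $(k,n,r)$. For $(\lambda,L)\in X$ with $\lambda$ of shape $\alpha$, assign the weight $\mathrm{wt}((\lambda,L))=\mathrm{sign}(\lambda) = (-1)^{|\alpha|-\ell(\alpha)}$. Then \[\sum_{(\lambda,L)\in X}\mathrm{wt}((\lambda,L))=\sum_{i=0}^k\binom{(r+1)i+n}{i}.\]
   Context: A composition $\alpha=(\alpha_1,\dots,\alpha_j)$ of $m\ge 0$ is a finite sequence of positive integers summing to $m$ (the empty composition $()$ is the composition of $0$); $|\alpha|$ is the sum of the parts, $\ell(\alpha)$ the number of parts. For $r\ge 0$, $c(m,r)$ is the set of compositions of $m$ with all parts in $\{2,\dots,r+1\}$, and $\mathcal{C}(k,r)=\bigcup_{m=0}^k c(m,r)$. A labeled tableau of shape $\alpha$ is a filling of the Young diagram of $\alpha$ (left-justified rows, row $i$ having $\alpha_i$ boxes) such that the first box of each row is empty and the remaining entries of each row are nonnegative integers strictly increasing from left to right; $\Lambda(\alpha,r)$ is the set of labeled tableaux of shape $\alpha$ all of whose entries are less than $r$. For $\lambda\in\Lambda(\alpha,r)$, $\mathrm{sign}(\lambda)=(-1)^{|\alpha|-\ell(\alpha)}$. A lattice sequence of width $m$ and height $h$ is a sequence of integers $(L_0,L_1,\dots,L_{m+1})$ with $0=L_0\le L_1\le\dots\le L_{m+1}=h$; $\mathcal{L}(m,h)$ denotes the set of these. A labeled lattice sequence of type $(k,n,r)$ is a pair $(\lambda,L)$ with $\lambda\in\Lambda(\alpha,r)$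 for some $\alpha\in\mathcal{C}(k,r)$ and $L\in\mathcal{L}(rk+n+1+\ell(\alpha),\,k-|\alpha|)$. *)

theory Defs
  imports Main
begin

definition comps_c :: "nat \<Rightarrow> nat \<Rightarrow> nat list set" where
  "comps_c m r = {\<alpha>. sum_list \<alpha> = m \<and> (\<forall>a\<in>set \<alpha>. 2 \<le> a \<and> a \<le> r + 1)}"

definition comps_C :: "nat \<Rightarrow> nat \<Rightarrow> nat list set" where
  "comps_C k r = (\<Union>m\<in>{0..k}. comps_c m r)"

text \<open>A filling of a Young diagram: a list of rows, each a list of boxes;
  an empty box is None, a labelled box is Some x.\<close>

definition shape :: "nat option list list \<Rightarrow> nat list" where
  "shape T = map length T"

definition Lambda :: "nat list \<Rightarrow> nat \<Rightarrow> nat option list list set" where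
  "Lambda \<alpha> r = {T. length T = length \<alpha> \<and>
     (\<forall>i<length \<alpha>. \<exists>xs. T ! i = None # map Some xs \<and> length xs + 1 = \<alpha> ! i \<and>
        sorted_wrt (<) xs \<and> (\<forall>x\<in>set xs. x < r))}"

definition sign :: "nat option list list \<Rightarrow> int" where
  "sign T = (-1) ^ (sum_list (shape T) - length (shape T))"

definition lattice_seqs :: "nat \<Rightarrow> int \<Rightarrow> int list set" where
  "lattice_seqs m h = {L. length L = m + 2 \<and> L ! 0 = 0 \<and> sorted L \<and> L ! (m + 1) = h}"

definition labeled_lattice_seqs :: "nat \<Rightarrow> nat \<Rightarrow> nat \<Rightarrow> (nat option list list \<times> int list) set" where
  "labeled_lattice_seqs k n r = {(T, L). \<exists>\<alpha>\<in>comps_C k r. T \<in> Lambda \<alpha> r \<and>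
      L \<in> lattice_seqs (r * k + n + 1 + length \<alpha>) (int k - int (sum_list \<alpha>))}"

definition wt :: "nat option list list \<times> int list \<Rightarrow> int" where
  "wt x = sign (fst x)"

end

theory Submission
  imports Defs "HOL-Computational_Algebra.Formal_Power_Series"
begin

unbundle fps_syntax



definition AA :: "rat fps" where "AA = Abs_fps (\<lambda>_. 1)"

lemma AA_eq: "AA = 1 + fps_X * AA"
  by (rule fps_ext) (simp add: AA_def)

lemma AA_inv: "(1 - fps_X) * AA = 1"
proof -
  have "(1 - fps_X) * AA = AA - fps_X * AA" by (simp add: algebra_simps)
  also have "\<dots> = 1" using AA_eq by (metis add_diff_cancel_right')
  finally show ?thesis .
qed

lemma AA_pow_shift: "(1 - fps_X) ^ r * AA ^ (q + r) = AA ^ q"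
proof -
  have "(1 - fps_X) ^ r * AA ^ (q + r) = ((1 - fps_X) * AA) ^ r * AA ^ q"
    unfolding power_mult_distrib power_add by (simp only: mult_ac)
  then show ?thesis using AA_inv by simp
qed

lemma AA_pow_step: "(1 - fps_X) * AA ^ Suc q = AA ^ q"
  using AA_pow_shift[of 1 q] by simp

lemma AA_nth[simp]: "AA $ n = 1" by (simp add: AA_def)

lemma AA_pow_nth: "(AA ^ Suc p) $ t = of_nat ((p + t) choose t)"
proof (induction p arbitrary: t)
  case 0
  then show ?case by (simp add: AA_def)
next
  case (Suc p)
  have "(AA ^ Suc (Suc p)) $ t = (AA ^ Suc p * AA) $ t" by (simp only: power_Suc2)
  also have "\<dots> = (\<Sum>i=0..t. of_nat ((p + i) choose i))"
    by (simp only: fps_mult_nth AA_nth mult_1_right Suc.IH)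
  also have "\<dots> = of_nat (\<Sum>i\<le>t. (p + i) choose i)"
    by (simp add: atLeast0AtMost)
  also have "\<dots> = of_nat ((Suc p + t) choose t)"
    by (subst sum_choose_lower) simp
  finally show ?case .
qed

definition PP :: "nat \<Rightarrow> nat \<Rightarrow> nat \<Rightarrow> rat fps" where
  "PP r K M = (\<Sum>i<K. fps_X ^ i * AA ^ (M - r * i))"

lemma PP_identity:
  assumes "r * K \<le> M"
  shows "PP r (Suc K) M = AA ^ (M + 1) + fps_X * ((1 - fps_X) ^ r - 1) * PP r K (M + 1)
           - fps_X ^ (K + 1) * AA ^ (M + 1 - r * K)"
  using assms
proof (induction K)
  case 0
  have "AA ^ M = AA ^ (M+1) - fps_X * AA ^ (M+1)"
    using AA_pow_step[of M] by (simp add: algebra_simps)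
  then show ?case by (simp add: PP_def)
next
  case (Suc K)
  define q where "q = M - r * Suc K"
  have hq: "M + 1 - r * K = q + 1 + r" "M + 1 - r * Suc K = q + 1" "M - r * Suc K = q"
    using Suc.prems by (auto simp: q_def algebra_simps)
  have IH: "PP r (Suc K) M = AA ^ (M + 1) + fps_X * ((1 - fps_X) ^ r - 1) * PP r K (M + 1)
           - fps_X ^ (K + 1) * AA ^ (M + 1 - r * K)"
    using Suc by simp
  have e1: "(1 - fps_X) ^ r * AA ^ (q + 1 + r) = AA ^ (q+1)"
    using AA_pow_shift[of r "q+1"] by simp
  have e2: "AA ^ (q+1) - fps_X * AA ^ (q+1) = AA ^ q"
    using AA_pow_step[of q] by (simp add: algebra_simps)
  have s1: "PP r (Suc (Suc K)) M = PP r (Suc K) M + fps_X ^ Suc K * AA ^ q"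
    by (simp add: PP_def q_def)
  have s2: "PP r (Suc K) (M+1) = PP r K (M+1) + fps_X ^ K * AA ^ (q + 1 + r)"
    using hq(1) by (simp add: PP_def)
  have key: "fps_X ^ (K+1) * AA ^ q = fps_X ^ (K+1) * ((1 - fps_X) ^ r * AA ^ (q + 1 + r))
      - fps_X ^ (K+2) * AA ^ (q+1)"
    by (simp only: e1 e2[symmetric]) (simp add: algebra_simps)
  have "PP r (Suc (Suc K)) M = AA ^ (M + 1) + fps_X * ((1 - fps_X) ^ r - 1) * PP r K (M + 1)
           - fps_X ^ (K + 1) * AA ^ (q + 1 + r) + fps_X ^ (K+1) * AA ^ q"
    using s1 IH hq(1) by simp
  also have "\<dots> = AA ^ (M + 1) + fps_X * ((1 - fps_X) ^ r - 1) * (PP r K (M + 1) + fps_X ^ K * AA ^ (q + 1 + r))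
           - fps_X ^ (K + 2) * AA ^ (q + 1)"
    unfolding key by (simp add: algebra_simps)
  finally show ?case using s2 hq(2) by simp
qed


lemma one_minus_X_pow:
  "(1 - fps_X) ^ r - 1 = (\<Sum>b\<in>{1..r}. fps_const ((-1) ^ b * of_nat (r choose b)) * fps_X ^ b :: rat fps)"
proof -
  have "(1 - fps_X :: rat fps) ^ r = (- fps_X + 1) ^ r" by simp
  also have "\<dots> = (\<Sum>b\<le>r. of_nat (r choose b) * (- fps_X) ^ b * 1 ^ (r - b))"
    by (rule binomial_ring)
  also have "\<dots> = (\<Sum>b\<le>r. fps_const ((-1) ^ b * of_nat (r choose b)) * fps_X ^ b)"
  proof (rule sum.cong[OF refl])
    fix b assume "b \<in> {..r}"
    have neg: "(- fps_X :: rat fps) ^ b = fps_const ((-1) ^ b) * fps_X ^ b"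
    proof -
      have m1: "(-1::rat fps) = fps_const (-1)" by (metis fps_const_neg fps_const_1_eq_1)
      show ?thesis by (subst power_minus) (simp only: m1 fps_const_power)
    qed
    have c: "(of_nat (r choose b) :: rat fps) = fps_const (of_nat (r choose b))" by (simp only: fps_of_nat)
    have cm: "fps_const ((-1) ^ b * of_nat (r choose b)) = fps_const ((-1) ^ b) * (fps_const (of_nat (r choose b)) :: rat fps)"
      by (simp only: fps_const_mult)
    show "of_nat (r choose b) * (- fps_X) ^ b * 1 ^ (r - b) = fps_const ((-1) ^ b * of_nat (r choose b)) * (fps_X ^ b :: rat fps)"
      unfolding neg c cm power_one mult_1_right mult_1_left by (simp only: mult_ac)
  qed
  also have "\<dots> = 1 + (\<Sum>b\<in>{1..r}. fps_const ((-1) ^ b * of_nat (r choose b)) * fps_X ^ b)"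
    by (simp only: atMost_atLeast0 sum.atLeast_Suc_atMost[OF le0]) simp
  finally show ?thesis by simp
qed



lemma X_stuff_nth:
  "(fps_X * ((1 - fps_X) ^ r - 1) * (P :: rat fps)) $ K =
     (\<Sum>b\<in>{1..r}. if b + 1 \<le> K then (-1) ^ b * of_nat (r choose b) * P $ (K - b - 1) else 0)"
proof -
  have "fps_X * ((1 - fps_X) ^ r - 1) * P =
     (\<Sum>b\<in>{1..r}. fps_const ((-1) ^ b * of_nat (r choose b)) * (fps_X ^ (b+1) * P))"
  proof -
    have "fps_X * ((1 - fps_X) ^ r - 1) * P =
       (\<Sum>b\<in>{1..r}. fps_X * (fps_const ((-1) ^ b * of_nat (r choose b)) * fps_X ^ b) * P)"
      by (simp only: one_minus_X_pow sum_distrib_left sum_distrib_right)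
    also have "\<dots> = (\<Sum>b\<in>{1..r}. fps_const ((-1) ^ b * of_nat (r choose b)) * (fps_X ^ (b+1) * P))"
      by (rule sum.cong[OF refl]) (simp only: power_add power_one_right mult_ac)
    finally show ?thesis .
  qed
  then show ?thesis
    by (simp only: fps_sum_nth fps_mult_left_const_nth fps_X_power_mult_nth) (rule sum.cong[OF refl], auto)
qed

lemma PP_nth_trunc: "j < K \<Longrightarrow> PP r K M $ j = PP r (Suc j) M $ j"
proof (induction K)
  case 0 then show ?case by simp
next
  case (Suc K)
  show ?case
  proof (cases "j = K")
    case True then show ?thesis by simp
  next
    case False
    then have "j < K" using Suc.prems by simp
    have "PP r (Suc K) M $ j = PP r K M $ j + (fps_X ^ K * AA ^ (M - r * K)) $ j"
      by (simp add: PP_def)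
    also have "(fps_X ^ K * AA ^ (M - r * K)) $ j = 0"
      using \<open>j < K\<close> by (simp add: fps_X_power_mult_nth)
    finally show ?thesis using Suc.IH \<open>j < K\<close> by simp
  qed
qed

definition TT :: "nat \<Rightarrow> nat \<Rightarrow> nat \<Rightarrow> rat" where
  "TT r K M = PP r (Suc K) M $ K"

lemma TT_rec:
  assumes "r * K \<le> M"
  shows "TT r K M = of_nat ((M + K) choose K) +
    (\<Sum>b\<in>{1..r}. if b + 1 \<le> K then (-1) ^ b * of_nat (r choose b) * TT r (K - b - 1) (M + 1) else 0)"
proof -
  have "TT r K M = (AA ^ (M + 1)) $ K + (fps_X * ((1 - fps_X) ^ r - 1) * PP r K (M + 1)) $ K
           - (fps_X ^ (K + 1) * AA ^ (M + 1 - r * K)) $ K"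
    unfolding TT_def PP_identity[OF assms] by simp
  also have "(fps_X ^ (K + 1) * AA ^ (M + 1 - r * K)) $ K = 0"
    by (subst fps_X_power_mult_nth) simp
  also have "(AA ^ (M + 1)) $ K = of_nat ((M + K) choose K)"
    using AA_pow_nth[of M K] by simp
  also have "(fps_X * ((1 - fps_X) ^ r - 1) * PP r K (M + 1)) $ K =
     (\<Sum>b\<in>{1..r}. if b + 1 \<le> K then (-1) ^ b * of_nat (r choose b) * TT r (K - b - 1) (M + 1) else 0)"
    unfolding X_stuff_nth
  proof (rule sum.cong[OF refl])
    fix b assume "b \<in> {1..r}"
    show "(if b + 1 \<le> K then (-1) ^ b * of_nat (r choose b) * PP r K (M + 1) $ (K - b - 1) else 0) =
          (if b + 1 \<le> K then (-1) ^ b * of_nat (r choose b) * TT r (K - b - 1) (M + 1) else 0)"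
      using \<open>b \<in> {1..r}\<close> by (auto simp: TT_def intro!: PP_nth_trunc)
  qed
  finally show ?thesis by simp
qed

lemma TT_final: "TT r k (r * k + n + 1) = (\<Sum>i=0..k. of_nat (((r + 1) * i + n) choose i))"
proof -
  have "TT r k (r * k + n + 1) = (\<Sum>i<Suc k. (fps_X ^ i * AA ^ (r * k + n + 1 - r * i)) $ k)"
    by (simp add: TT_def PP_def fps_sum_nth)
  also have "\<dots> = (\<Sum>i<Suc k. of_nat (((r + 1) * (k - i) + n) choose (k - i)))"
  proof (rule sum.cong[OF refl])
    fix i assume "i \<in> {..<Suc k}"
    then have ik: "i \<le> k" by simp
    have e: "r * k + n + 1 - r * i = Suc (r * (k - i) + n)"
    proof -
      have "r*(k-i) = r*k - r*i" by (simp add: diff_mult_distrib2)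
      moreover have "r*i \<le> r*k" using ik by simp
      ultimately show ?thesis by linarith
    qed
    have e2: "r * (k - i) + n + (k - i) = (r + 1) * (k - i) + n" by (simp add: add_mult_distrib)
    show "(fps_X ^ i * AA ^ (r * k + n + 1 - r * i)) $ k = of_nat (((r + 1) * (k - i) + n) choose (k - i))"
    proof -
      have "(fps_X ^ i * AA ^ (r * k + n + 1 - r * i)) $ k = (AA ^ Suc (r * (k - i) + n)) $ (k - i)"
        unfolding e using ik by (simp add: fps_X_power_mult_nth)
      also have "\<dots> = of_nat (((r + 1) * (k - i) + n) choose (k - i))"
        by (simp only: AA_pow_nth e2)
      finally show ?thesis .
    qed
  qed
  also have "\<dots> = (\<Sum>i<Suc k. of_nat (((r + 1) * i + n) choose i))"
    using sum.nat_diff_reindex[of "\<lambda>i. of_nat (((r + 1) * i + n) choose i) :: rat" "Suc k"] by simp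
  finally show ?thesis by (simp add: atLeast0AtMost lessThan_Suc_atMost)
qed



definition SL :: "nat \<Rightarrow> nat \<Rightarrow> nat list set" where
  "SL j r = {xs. length xs = j \<and> sorted_wrt (<) xs \<and> set xs \<subseteq> {..<r}}"

lemma card_SL: "card (SL j r) = r choose j"
proof -
  have inj: "inj_on set (SL j r)"
    by (rule inj_onI) (auto simp: SL_def intro: strict_sorted_equal)
  have img: "set ` SL j r = {B. B \<subseteq> {..<r} \<and> card B = j}"
  proof
    show "set ` SL j r \<subseteq> {B. B \<subseteq> {..<r} \<and> card B = j}"
      by (auto simp: SL_def strict_sorted_iff distinct_card)
  next
    show "{B. B \<subseteq> {..<r} \<and> card B = j} \<subseteq> set ` SL j r"
    proof
      fix B assume B: "B \<in> {B. B \<subseteq> {..<r} \<and> card B = j}"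
      then have fin: "finite B" using finite_subset by auto
      have "sorted_list_of_set B \<in> SL j r"
        using B fin by (auto simp: SL_def)
      moreover have "B = set (sorted_list_of_set B)" using fin by simp
      ultimately show "B \<in> set ` SL j r" by blast
    qed
  qed
  have "card (SL j r) = card (set ` SL j r)" using card_image[OF inj] by simp
  also have "\<dots> = r choose j" unfolding img by (simp add: n_subsets)
  finally show ?thesis .
qed

definition Row :: "nat \<Rightarrow> nat \<Rightarrow> nat option list set" where
  "Row a r = {t. \<exists>xs. t = None # map Some xs \<and> length xs + 1 = a \<and> sorted_wrt (<) xs \<and> (\<forall>x\<in>set xs. x < r)}"

lemma card_Row: "1 \<le> a \<Longrightarrow> card (Row a r) = r choose (a - 1)"
proof -
  assume a: "1 \<le> a"
  have "Row a r = (\<lambda>xs. None # map Some xs) ` SL (a - 1) r"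
    using a by (auto simp: Row_def SL_def)
  moreover have "inj_on (\<lambda>xs. None # map Some xs) (SL (a - 1) r)"
    by (rule inj_onI) (simp add: inj_map_eq_map inj_on_def)
  ultimately show ?thesis by (simp add: card_image card_SL)
qed

lemma Lambda_Nil: "Lambda [] r = {[]}"
  by (auto simp: Lambda_def)

lemma Lambda_Cons: "Lambda (a # \<alpha>) r = (\<lambda>(t, T). t # T) ` (Row a r \<times> Lambda \<alpha> r)"
proof
  show "Lambda (a # \<alpha>) r \<subseteq> (\<lambda>(t, T). t # T) ` (Row a r \<times> Lambda \<alpha> r)"
  proof
    fix T assume T: "T \<in> Lambda (a # \<alpha>) r"
    then obtain t T' where tT: "T = t # T'" by (cases T) (auto simp: Lambda_def)
    have "t \<in> Row a r" using T tT unfolding Lambda_def Row_def by force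
    moreover have "T' \<in> Lambda \<alpha> r"
    proof -
      have "length T' = length \<alpha>" using T tT by (simp add: Lambda_def)
      moreover have "\<forall>i<length \<alpha>. \<exists>xs. T' ! i = None # map Some xs \<and> length xs + 1 = \<alpha> ! i \<and>
        sorted_wrt (<) xs \<and> (\<forall>x\<in>set xs. x < r)"
      proof (intro allI impI)
        fix i assume "i < length \<alpha>"
        then have "Suc i < length (a # \<alpha>)" by simp
        then show "\<exists>xs. T' ! i = None # map Some xs \<and> length xs + 1 = \<alpha> ! i \<and>
          sorted_wrt (<) xs \<and> (\<forall>x\<in>set xs. x < r)"
          using T tT unfolding Lambda_def by force
      qed
      ultimately show ?thesis by (simp add: Lambda_def)
    qed
    ultimately show "T \<in> (\<lambda>(t, T). t # T) ` (Row a r \<times> Lambda \<alpha> r)" using tT by blast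
  qed
next
  show "(\<lambda>(t, T). t # T) ` (Row a r \<times> Lambda \<alpha> r) \<subseteq> Lambda (a # \<alpha>) r"
  proof clarify
    fix t T assume t: "t \<in> Row a r" and T: "T \<in> Lambda \<alpha> r"
    show "t # T \<in> Lambda (a # \<alpha>) r"
      unfolding Lambda_def
    proof (intro CollectI conjI allI impI)
      show "length (t # T) = length (a # \<alpha>)" using T by (simp add: Lambda_def)
    next
      fix i assume i: "i < length (a # \<alpha>)"
      show "\<exists>xs. (t # T) ! i = None # map Some xs \<and> length xs + 1 = (a # \<alpha>) ! i \<and>
          sorted_wrt (<) xs \<and> (\<forall>x\<in>set xs. x < r)"
      proof (cases i)
        case 0 then show ?thesis using t by (simp add: Row_def)
      next
        case (Suc j) then show ?thesis using T i by (simp add: Lambda_def)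
      qed
    qed
  qed
qed

lemma card_Lambda: "(\<forall>a\<in>set \<alpha>. 1 \<le> a) \<Longrightarrow> card (Lambda \<alpha> r) = prod_list (map (\<lambda>a. r choose (a - 1)) \<alpha>)"
proof (induction \<alpha>)
  case Nil then show ?case by (simp add: Lambda_Nil)
next
  case (Cons a \<alpha>)
  have "inj_on (\<lambda>(t, T). t # T) (Row a r \<times> Lambda \<alpha> r)"
    by (rule inj_onI) auto
  then have "card (Lambda (a # \<alpha>) r) = card (Row a r) * card (Lambda \<alpha> r)"
    by (simp add: Lambda_Cons card_image card_cartesian_product)
  then show ?case using Cons by (simp add: card_Row)
qed

lemma Lambda_shape: "T \<in> Lambda \<alpha> r \<Longrightarrow> map length T = \<alpha>"
proof (rule nth_equalityI)
  assume T: "T \<in> Lambda \<alpha> r"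
  then show "length (map length T) = length \<alpha>" by (simp add: Lambda_def)
  fix i assume "i < length (map length T)"
  then show "map length T ! i = \<alpha> ! i" using T by (auto simp: Lambda_def)
qed


definition QQ :: "nat \<Rightarrow> int \<Rightarrow> nat \<Rightarrow> int list set" where
  "QQ m lo d = {xs. length xs = m \<and> sorted xs \<and> set xs \<subseteq> {lo..lo + int d}}"

lemma QQ_0: "QQ 0 lo d = {[]}" by (auto simp: QQ_def)

lemma QQ_Suc_0: "QQ (Suc m) lo 0 = Cons lo ` QQ m lo 0"
proof
  show "QQ (Suc m) lo 0 \<subseteq> Cons lo ` QQ m lo 0"
  proof
    fix xs assume "xs \<in> QQ (Suc m) lo 0"
    then obtain x ys where "xs = x # ys" "x = lo" "ys \<in> QQ m lo 0"
      by (cases xs) (auto simp: QQ_def)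
    then show "xs \<in> Cons lo ` QQ m lo 0" by blast
  qed
qed (auto simp: QQ_def)

lemma QQ_Suc_Suc: "QQ (Suc m) lo (Suc d) = Cons lo ` QQ m lo (Suc d) \<union> QQ (Suc m) (lo + 1) d"
proof
  show "QQ (Suc m) lo (Suc d) \<subseteq> Cons lo ` QQ m lo (Suc d) \<union> QQ (Suc m) (lo + 1) d"
  proof
    fix xs assume xs: "xs \<in> QQ (Suc m) lo (Suc d)"
    then obtain x ys where xys: "xs = x # ys" by (cases xs) (auto simp: QQ_def)
    show "xs \<in> Cons lo ` QQ m lo (Suc d) \<union> QQ (Suc m) (lo + 1) d"
    proof (cases "x = lo")
      case True
      then have "ys \<in> QQ m lo (Suc d)" using xs xys by (auto simp: QQ_def)
      then show ?thesis using True xys by blast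
    next
      case False
      then have "x \<ge> lo + 1" using xs xys by (auto simp: QQ_def)
      then have "xs \<in> QQ (Suc m) (lo + 1) d" using xs xys by (fastforce simp: QQ_def)
      then show ?thesis by blast
    qed
  qed
next
  show "Cons lo ` QQ m lo (Suc d) \<union> QQ (Suc m) (lo + 1) d \<subseteq> QQ (Suc m) lo (Suc d)"
    by (auto simp: QQ_def subset_iff)
qed

lemma card_QQ: "card (QQ m lo d) = (m + d) choose m"
proof (induction m arbitrary: lo d)
  case 0 then show ?case by (simp add: QQ_0)
next
  case (Suc m)
  note IHm = Suc.IH
  show ?case
  proof (induction d arbitrary: lo)
    case 0
    then show ?case by (simp add: QQ_Suc_0 card_image IHm)
  next
    case (Suc d)
    have f1: "finite (QQ m lo (Suc d))"
      using IHm[of lo "Suc d"] by (metis card_gt_0_iff zero_less_binomial_iff le_add1)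
    have f2: "finite (QQ (Suc m) (lo + 1) d)"
      using Suc.IH[of "lo+1"] by (metis card_gt_0_iff zero_less_binomial_iff le_add1)
    have disj: "Cons lo ` QQ m lo (Suc d) \<inter> QQ (Suc m) (lo + 1) d = {}"
      by (auto simp: QQ_def)
    have "card (QQ (Suc m) lo (Suc d)) = card (QQ m lo (Suc d)) + card (QQ (Suc m) (lo + 1) d)"
      unfolding QQ_Suc_Suc
      by (subst card_Un_disjoint) (use f1 f2 disj in \<open>auto simp: card_image\<close>)
    also have "\<dots> = ((m + Suc d) choose m) + ((Suc m + d) choose (Suc m))"
      using Suc.IH[of "lo+1"] IHm[of lo "Suc d"] by simp
    also have "\<dots> = (Suc m + Suc d) choose (Suc m)" by simp
    finally show ?case .
  qed
qed

lemma lattice_QQ: "lattice_seqs m (int H) = (\<lambda>ys. 0 # ys @ [int H]) ` QQ m 0 H"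
proof
  show "lattice_seqs m (int H) \<subseteq> (\<lambda>ys. 0 # ys @ [int H]) ` QQ m 0 H"
  proof
    fix L assume L: "L \<in> lattice_seqs m (int H)"
    then have len: "length L = m + 2" and L0: "L ! 0 = 0" and sL: "sorted L" and Lm: "L ! (m+1) = int H"
      by (auto simp: lattice_seqs_def)
    obtain x L' where xL': "L = x # L'" using len by (cases L) auto
    obtain ys y where ysy: "L' = ys @ [y]" using len xL' by (cases L' rule: rev_exhaust) auto
    have lys: "length ys = m" using len xL' ysy by simp
    have x0: "x = 0" using L0 xL' by simp
    have yH: "y = int H" using Lm xL' ysy lys by (simp add: nth_append)
    have "ys \<in> QQ m 0 H"
      using sL lys unfolding QQ_def xL' ysy x0 yH by (auto simp: sorted_append)
    then show "L \<in> (\<lambda>ys. 0 # ys @ [int H]) ` QQ m 0 H" using xL' ysy x0 yH by blast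
  qed
next
  show "(\<lambda>ys. 0 # ys @ [int H]) ` QQ m 0 H \<subseteq> lattice_seqs m (int H)"
    by (auto simp: QQ_def lattice_seqs_def sorted_append nth_append subset_iff)
qed

lemma card_lattice: "card (lattice_seqs m (int H)) = (m + H) choose m"
proof -
  have "inj_on (\<lambda>ys. 0 # ys @ [int H]) (QQ m 0 H)" by (rule inj_onI) simp
  then show ?thesis by (simp add: lattice_QQ card_image card_QQ)
qed



lemma comps_C_iff: "\<alpha> \<in> comps_C K r \<longleftrightarrow> sum_list \<alpha> \<le> K \<and> (\<forall>a\<in>set \<alpha>. 2 \<le> a \<and> a \<le> r + 1)"
  by (auto simp: comps_C_def comps_c_def)

lemma finite_comps_C: "finite (comps_C K r)"
proof (rule finite_subset)
  show "comps_C K r \<subseteq> {xs. set xs \<subseteq> {..K} \<and> length xs \<le> K}"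
  proof
    fix \<alpha> assume a: "\<alpha> \<in> comps_C K r"
    then have s: "sum_list \<alpha> \<le> K" and p: "\<forall>a\<in>set \<alpha>. 2 \<le> a" by (auto simp: comps_C_iff)
    have "\<forall>a\<in>set \<alpha>. a \<le> sum_list \<alpha>" by (simp add: member_le_sum_list)
    then have "set \<alpha> \<subseteq> {..K}" using s by auto
    moreover have "length \<alpha> \<le> sum_list \<alpha>"
      using p by (induction \<alpha>) auto
    ultimately show "\<alpha> \<in> {xs. set xs \<subseteq> {..K} \<and> length xs \<le> K}" using s by simp
  qed
  show "finite {xs. set xs \<subseteq> {..K} \<and> length xs \<le> K}"
    by (rule finite_lists_length_le) simp
qed

lemma comps_C_split:
  "comps_C K r = insert [] (\<Union>b\<in>{b\<in>{1..r}. b + 1 \<le> K}. Cons (b + 1) ` comps_C (K - b - 1) r)"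
proof
  show "comps_C K r \<subseteq> insert [] (\<Union>b\<in>{b\<in>{1..r}. b + 1 \<le> K}. Cons (b + 1) ` comps_C (K - b - 1) r)"
  proof
    fix \<alpha> assume a: "\<alpha> \<in> comps_C K r"
    show "\<alpha> \<in> insert [] (\<Union>b\<in>{b\<in>{1..r}. b + 1 \<le> K}. Cons (b + 1) ` comps_C (K - b - 1) r)"
    proof (cases \<alpha>)
      case Nil then show ?thesis by simp
    next
      case (Cons a \<beta>)
      then have h: "a + sum_list \<beta> \<le> K" "2 \<le> a" "a \<le> r + 1" "\<forall>x\<in>set \<beta>. 2 \<le> x \<and> x \<le> r + 1"
        using a by (auto simp: comps_C_iff)
      then have "\<beta> \<in> comps_C (K - (a - 1) - 1) r" by (auto simp: comps_C_iff)
      moreover have "a - 1 \<in> {b\<in>{1..r}. b + 1 \<le> K}" using h by auto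
      moreover have "\<alpha> = (a - 1 + 1) # \<beta>" using Cons h by simp
      ultimately show ?thesis by blast
    qed
  qed
next
  show "insert [] (\<Union>b\<in>{b\<in>{1..r}. b + 1 \<le> K}. Cons (b + 1) ` comps_C (K - b - 1) r) \<subseteq> comps_C K r"
    by (auto simp: comps_C_iff)
qed

definition wgt :: "nat \<Rightarrow> nat list \<Rightarrow> int" where
  "wgt r \<alpha> = (-1) ^ (sum_list \<alpha> - length \<alpha>) * int (prod_list (map (\<lambda>a. r choose (a - 1)) \<alpha>))"

definition FF :: "nat \<Rightarrow> nat \<Rightarrow> nat \<Rightarrow> int" where
  "FF r K M = (\<Sum>\<alpha>\<in>comps_C K r. wgt r \<alpha> * int ((M + length \<alpha> + (K - sum_list \<alpha>)) choose (M + length \<alpha>)))"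

lemma len_le_sum: "\<forall>a\<in>set \<beta>. 1 \<le> a \<Longrightarrow> length \<beta> \<le> sum_list \<beta>"
  by (induction \<beta>) auto

lemma FF_rec:
  "FF r K M = int ((M + K) choose M) +
    (\<Sum>b\<in>{1..r}. if b + 1 \<le> K then (-1) ^ b * int (r choose b) * FF r (K - b - 1) (M + 1) else 0)"
proof -
  let ?g = "\<lambda>\<alpha>. wgt r \<alpha> * int ((M + length \<alpha> + (K - sum_list \<alpha>)) choose (M + length \<alpha>))"
  let ?B = "{b\<in>{1..r}. b + 1 \<le> K}"
  have fin: "finite ?B" by simp
  have "FF r K M = ?g [] + sum ?g (\<Union>b\<in>?B. Cons (b + 1) ` comps_C (K - b - 1) r)"
    unfolding FF_def comps_C_split[of K r]
    by (subst sum.insert) (auto intro: finite_comps_C)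
  also have "sum ?g (\<Union>b\<in>?B. Cons (b + 1) ` comps_C (K - b - 1) r) =
      (\<Sum>b\<in>?B. sum ?g (Cons (b + 1) ` comps_C (K - b - 1) r))"
    by (rule sum.UNION_disjoint) (auto intro: finite_comps_C)
  also have "\<dots> = (\<Sum>b\<in>?B. (-1) ^ b * int (r choose b) * FF r (K - b - 1) (M + 1))"
  proof (rule sum.cong[OF refl])
    fix b assume b: "b \<in> ?B"
    have "sum ?g (Cons (b + 1) ` comps_C (K - b - 1) r) = sum (?g \<circ> Cons (b + 1)) (comps_C (K - b - 1) r)"
      by (rule sum.reindex) simp
    also have "\<dots> = (\<Sum>\<beta>\<in>comps_C (K - b - 1) r. (-1) ^ b * int (r choose b) *
        (wgt r \<beta> * int ((M + 1 + length \<beta> + (K - b - 1 - sum_list \<beta>)) choose (M + 1 + length \<beta>))))"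
    proof (rule sum.cong[OF refl])
      fix \<beta> assume "\<beta> \<in> comps_C (K - b - 1) r"
      then have "\<forall>a\<in>set \<beta>. 1 \<le> a" by (auto simp: comps_C_iff)
      then have lb: "length \<beta> \<le> sum_list \<beta>" by (rule len_le_sum)
      have ex: "sum_list ((b + 1) # \<beta>) - length ((b + 1) # \<beta>) = b + (sum_list \<beta> - length \<beta>)"
        using lb by simp
      have pr: "prod_list (map (\<lambda>a. r choose (a - 1)) ((b + 1) # \<beta>)) = (r choose b) * prod_list (map (\<lambda>a. r choose (a - 1)) \<beta>)"
        by simp
      have w: "wgt r ((b + 1) # \<beta>) = (-1) ^ b * int (r choose b) * wgt r \<beta>"
        unfolding wgt_def ex pr power_add by (simp add: algebra_simps)
      have c1: "M + length ((b + 1) # \<beta>) + (K - sum_list ((b + 1) # \<beta>)) = M + 1 + length \<beta> + (K - b - 1 - sum_list \<beta>)"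
        by simp
      have c2: "M + length ((b + 1) # \<beta>) = M + 1 + length \<beta>" by simp
      show "(?g \<circ> Cons (b + 1)) \<beta> = (-1) ^ b * int (r choose b) *
        (wgt r \<beta> * int ((M + 1 + length \<beta> + (K - b - 1 - sum_list \<beta>)) choose (M + 1 + length \<beta>)))"
        unfolding comp_def w c1 unfolding c2 by (simp only: mult_ac)
    qed
    also have "\<dots> = (-1) ^ b * int (r choose b) * FF r (K - b - 1) (M + 1)"
      by (simp add: FF_def sum_distrib_left)
    finally show "sum ?g (Cons (b + 1) ` comps_C (K - b - 1) r) = (-1) ^ b * int (r choose b) * FF r (K - b - 1) (M + 1)" .
  qed
  also have "\<dots> = (\<Sum>b\<in>{1..r}. if b + 1 \<le> K then (-1) ^ b * int (r choose b) * FF r (K - b - 1) (M + 1) else 0)"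
    by (rule sum.inter_filter) simp
  finally show ?thesis by (simp add: wgt_def)
qed

lemma FF_TT: "r * K \<le> M \<Longrightarrow> rat_of_int (FF r K M) = TT r K M"
proof (induction K arbitrary: M rule: less_induct)
  case (less K)
  have "rat_of_int (FF r K M) = of_nat ((M + K) choose M) +
    (\<Sum>b\<in>{1..r}. if b + 1 \<le> K then (-1) ^ b * of_nat (r choose b) * rat_of_int (FF r (K - b - 1) (M + 1)) else 0)"
    by (subst FF_rec) (simp add: of_int_sum if_distrib cong: if_cong)
  also have "\<dots> = of_nat ((M + K) choose K) +
    (\<Sum>b\<in>{1..r}. if b + 1 \<le> K then (-1) ^ b * of_nat (r choose b) * TT r (K - b - 1) (M + 1) else 0)"
  proof -
    have "(M + K) choose M = (M + K) choose K" using binomial_symmetric[of M "M+K"] by simp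
    moreover have "(\<Sum>b\<in>{1..r}. if b + 1 \<le> K then (-1) ^ b * of_nat (r choose b) * rat_of_int (FF r (K - b - 1) (M + 1)) else 0)
      = (\<Sum>b\<in>{1..r}. if b + 1 \<le> K then (-1) ^ b * of_nat (r choose b) * TT r (K - b - 1) (M + 1) else 0)"
    proof (rule sum.cong[OF refl])
      fix b assume "b \<in> {1..r}"
      show "(if b + 1 \<le> K then (-1) ^ b * of_nat (r choose b) * rat_of_int (FF r (K - b - 1) (M + 1)) else 0) =
            (if b + 1 \<le> K then (-1) ^ b * of_nat (r choose b) * TT r (K - b - 1) (M + 1) else 0)"
      proof (cases "b + 1 \<le> K")
        case True
        have "r * (K - b - 1) \<le> r * K" by simp
        then have "r * (K - b - 1) \<le> M + 1" using less.prems by linarith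
        then have "rat_of_int (FF r (K - b - 1) (M + 1)) = TT r (K - b - 1) (M + 1)"
          using True by (intro less.IH) auto
        then show ?thesis by simp
      qed simp
    qed
    ultimately show ?thesis by simp
  qed
  also have "\<dots> = TT r K M" using TT_rec[OF less.prems] by simp
  finally show ?case .
qed



lemma prod_pos: "\<forall>a\<in>set \<alpha>. 1 \<le> a \<and> a \<le> r + 1 \<Longrightarrow> 0 < prod_list (map (\<lambda>a. r choose (a - 1)) \<alpha>)"
  by (induction \<alpha>) auto

theorem theorem3p1:
  fixes k n r :: nat
  shows "(\<Sum>x\<in>labeled_lattice_seqs k n r. wt x) = (\<Sum>i=0..k. int (((r + 1) * i + n) choose i))"
proof -
  define M where "M = r * k + n + 1"
  define S where "S = (\<lambda>\<alpha>. Lambda \<alpha> r \<times> lattice_seqs (r * k + n + 1 + length \<alpha>) (int k - int (sum_list \<alpha>)))"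
  have lab: "labeled_lattice_seqs k n r = snd ` Sigma (comps_C k r) S"
    unfolding labeled_lattice_seqs_def S_def by force
  have inj: "inj_on snd (Sigma (comps_C k r) S)"
    by (rule inj_onI) (auto simp: S_def dest!: Lambda_shape)
  have parts: "\<And>\<alpha>. \<alpha> \<in> comps_C k r \<Longrightarrow> (\<forall>a\<in>set \<alpha>. 1 \<le> a \<and> a \<le> r + 1) \<and> sum_list \<alpha> \<le> k"
    by (auto simp: comps_C_iff)
  have cardS: "card (S \<alpha>) = prod_list (map (\<lambda>a. r choose (a - 1)) \<alpha>) *
      ((M + length \<alpha> + (k - sum_list \<alpha>)) choose (M + length \<alpha>))" if a: "\<alpha> \<in> comps_C k r" for \<alpha>
  proof -
    have eq: "int k - int (sum_list \<alpha>) = int (k - sum_list \<alpha>)" using parts[OF a] by simp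
    have l: "card (lattice_seqs (r * k + n + 1 + length \<alpha>) (int k - int (sum_list \<alpha>))) =
       (M + length \<alpha> + (k - sum_list \<alpha>)) choose (M + length \<alpha>)"
      by (simp only: eq M_def card_lattice)
    have cl: "card (Lambda \<alpha> r) = prod_list (map (\<lambda>a. r choose (a - 1)) \<alpha>)"
      using parts[OF a] by (intro card_Lambda) auto
    show ?thesis unfolding S_def card_cartesian_product l cl ..
  qed
  have finS: "finite (S \<alpha>)" if a: "\<alpha> \<in> comps_C k r" for \<alpha>
  proof -
    have "0 < card (S \<alpha>)" unfolding cardS[OF a] using prod_pos[of \<alpha> r] parts[OF a] by (simp del: binomial_Suc_Suc, linarith)
    then show ?thesis using card_gt_0_iff by blast
  qed
  have "(\<Sum>x\<in>labeled_lattice_seqs k n r. wt x) = (\<Sum>y\<in>Sigma (comps_C k r) S. wt (snd y))"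
    unfolding lab by (rule sum.reindex[OF inj, unfolded comp_def])
  also have "\<dots> = (\<Sum>\<alpha>\<in>comps_C k r. \<Sum>x\<in>S \<alpha>. wt x)"
    using sum.Sigma[of "comps_C k r" S "\<lambda>\<alpha> x. wt x"] finite_comps_C finS by (simp add: split_def)
  also have "\<dots> = (\<Sum>\<alpha>\<in>comps_C k r. wgt r \<alpha> * int ((M + length \<alpha> + (k - sum_list \<alpha>)) choose (M + length \<alpha>)))"
  proof (rule sum.cong[OF refl])
    fix \<alpha> assume a: "\<alpha> \<in> comps_C k r"
    have "\<And>x. x \<in> S \<alpha> \<Longrightarrow> wt x = (-1) ^ (sum_list \<alpha> - length \<alpha>)"
      by (auto simp: S_def wt_def sign_def shape_def dest!: Lambda_shape)
    then have "(\<Sum>x\<in>S \<alpha>. wt x) = (\<Sum>x\<in>S \<alpha>. (-1) ^ (sum_list \<alpha> - length \<alpha>))"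
      by (rule sum.cong[OF refl])
    also have "\<dots> = int (card (S \<alpha>)) * (-1) ^ (sum_list \<alpha> - length \<alpha>)" by simp
    also have "\<dots> = wgt r \<alpha> * int ((M + length \<alpha> + (k - sum_list \<alpha>)) choose (M + length \<alpha>))"
      unfolding cardS[OF a] wgt_def by (simp add: algebra_simps)
    finally show "(\<Sum>x\<in>S \<alpha>. wt x) = wgt r \<alpha> * int ((M + length \<alpha> + (k - sum_list \<alpha>)) choose (M + length \<alpha>))" .
  qed
  also have "\<dots> = FF r k M" by (simp add: FF_def)
  finally have main: "(\<Sum>x\<in>labeled_lattice_seqs k n r. wt x) = FF r k M" .
  have "rat_of_int (FF r k M) = TT r k M" by (rule FF_TT) (simp add: M_def)
  also have "\<dots> = (\<Sum>i=0..k. of_nat (((r + 1) * i + n) choose i))" unfolding M_def by (rule TT_final)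
  also have "\<dots> = rat_of_int (\<Sum>i=0..k. int (((r + 1) * i + n) choose i))" by simp
  finally show ?thesis using main by (simp only: of_int_eq_iff)
qed


end
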